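(* Let $n\ge 2$ be an integer that is a multiple of $3$. If the Aztec diamond $\operatorname{AD}(n-1)$ has a cover by L-trominoes, then $\operatorname{AD}(n+3)$ has a cover by L-trominoes.
   Context: A cell is a unit square $[i,i+1]\times[j,j+1]$ with $i,j\in\mathbb{Z}$. An L-tromino is a set of three cells equal to a $2\times 2$ block of cells with one cell removed. A cover of a region $R$ (a finite edge-connected set of cells) is a set of pairwise disjoint L-trominoes contained in $R$ whose union is $R$. The Aztec diamond $\operatorname{AD}(n)$ is the union of the cells $[a,a+1]\times[b,b+1]$, $a,b\in\mathbb{Z}$, lying completely inside $\{(x,y): |x|+|y|\le n+1\}$. *)

theory Defs
  imports Main
begin

text \<open>A cell [i,i+1] x [j,j+1] is represented by its lower-left corner (i,j).\<close>
type_synonym cell = "int \<times> int"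

definition block2 :: "int \<Rightarrow> int \<Rightarrow> cell set" where
  "block2 i j = {(i,j), (i+1,j), (i,j+1), (i+1,j+1)}"

definition L_tromino :: "cell set \<Rightarrow> bool" where
  "L_tromino T \<longleftrightarrow> (\<exists>i j c. c \<in> block2 i j \<and> T = block2 i j - {c})"

definition is_cover :: "cell set \<Rightarrow> cell set set \<Rightarrow> bool" where
  "is_cover R \<T> \<longleftrightarrow>
     (\<forall>T\<in>\<T>. L_tromino T \<and> T \<subseteq> R) \<and>
     (\<forall>T\<in>\<T>. \<forall>T'\<in>\<T>. T \<noteq> T' \<longrightarrow> T \<inter> T' = {}) \<and>
     \<Union>\<T> = R"

definition has_tromino_cover :: "cell set \<Rightarrow> bool" where
  "has_tromino_cover R \<longleftrightarrow> (\<exists>\<T>. is_cover R \<T>)"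

text \<open>The cell with corner (a,b) lies in {|x|+|y| \<le> m} iff all four of its corners do
  (the region is convex).\<close>
definition aztec_diamond :: "nat \<Rightarrow> cell set" where
  "aztec_diamond n = {(a,b). \<forall>x\<in>{a,a+1}. \<forall>y\<in>{b,b+1}. \<bar>x\<bar> + \<bar>y\<bar> \<le> int n + 1}"

end

theory Submission
  imports Defs
begin

lemma hc_single:
  assumes "c \<in> block2 i j" shows "has_tromino_cover (block2 i j - {c})"
proof -
  have "L_tromino (block2 i j - {c})" using assms unfolding L_tromino_def by blast
  then have "is_cover (block2 i j - {c}) {block2 i j - {c}}" by (auto simp: is_cover_def)
  then show ?thesis by (auto simp: has_tromino_cover_def)
qed

lemma hc_union:
  assumes "has_tromino_cover A" "has_tromino_cover B" "A \<inter> B = {}"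
  shows "has_tromino_cover (A \<union> B)"
proof -
  obtain S where S: "is_cover A S" using assms(1) by (auto simp: has_tromino_cover_def)
  obtain S' where S': "is_cover B S'" using assms(2) by (auto simp: has_tromino_cover_def)
  have "is_cover (A \<union> B) (S \<union> S')"
    unfolding is_cover_def
  proof (intro conjI)
    show "\<forall>T\<in>S \<union> S'. L_tromino T \<and> T \<subseteq> A \<union> B" using S S' by (auto simp: is_cover_def)
    show "\<Union> (S \<union> S') = A \<union> B" using S S' by (auto simp: is_cover_def)
    show "\<forall>T\<in>S \<union> S'. \<forall>T'\<in>S \<union> S'. T \<noteq> T' \<longrightarrow> T \<inter> T' = {}"
    proof (intro ballI impI)
      fix T T' assume T: "T \<in> S \<union> S'" and T': "T' \<in> S \<union> S'" and ne: "T \<noteq> T'"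
      have a: "\<forall>T\<in>S. T \<subseteq> A" "\<forall>T\<in>S'. T \<subseteq> B" using S S' by (auto simp: is_cover_def)
      have dS: "\<forall>T\<in>S. \<forall>T'\<in>S. T \<noteq> T' \<longrightarrow> T \<inter> T' = {}"
        and dS': "\<forall>T\<in>S'. \<forall>T'\<in>S'. T \<noteq> T' \<longrightarrow> T \<inter> T' = {}"
        using S S' unfolding is_cover_def by auto
      show "T \<inter> T' = {}"
      proof (cases "T \<in> S")
        case True
        show ?thesis
        proof (cases "T' \<in> S")
          case True2: True
          then show ?thesis using True dS ne by blast
        next
          case False
          then have "T' \<subseteq> B" using T' a by blast
          moreover have "T \<subseteq> A" using True a by blast
          ultimately show ?thesis using assms(3) by blast
        qed
      next
        case False
        then have TB: "T \<in> S'" "T \<subseteq> B" using T a by blast+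
        show ?thesis
        proof (cases "T' \<in> S")
          case True
          then have "T' \<subseteq> A" using a by blast
          then show ?thesis using TB assms(3) by blast
        next
          case False
          then have "T' \<in> S'" using T' by blast
          then show ?thesis using TB dS' ne by blast
        qed
      qed
    qed
  qed
  then show ?thesis by (auto simp: has_tromino_cover_def)
qed

lemma hc_image:
  assumes inj: "inj f"
    and blk: "\<And>i j. \<exists>i' j'. f ` block2 i j = block2 i' j'"
    and "has_tromino_cover A"
  shows "has_tromino_cover (f ` A)"
proof -
  obtain S where S: "is_cover A S" using assms(3) by (auto simp: has_tromino_cover_def)
  have L: "L_tromino (f ` T)" if LT: "L_tromino T" for T
  proof -
    obtain i j c where c: "c \<in> block2 i j" and T: "T = block2 i j - {c}"
      using LT unfolding L_tromino_def by blast
    obtain i' j' where e: "f ` block2 i j = block2 i' j'" using blk by blast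
    have "f ` T = block2 i' j' - {f c}" using T e inj
      by (simp add: image_set_diff)
    moreover have "f c \<in> block2 i' j'" using e c by blast
    ultimately show ?thesis unfolding L_tromino_def by blast
  qed
  have "is_cover (f ` A) ((`) f ` S)"
    unfolding is_cover_def
  proof (intro conjI)
    show "\<forall>T\<in>(`) f ` S. L_tromino T \<and> T \<subseteq> f ` A" using S L by (auto simp: is_cover_def)
    show "\<Union> ((`) f ` S) = f ` A" using S by (auto simp: is_cover_def)
    show "\<forall>T\<in>(`) f ` S. \<forall>T'\<in>(`) f ` S. T \<noteq> T' \<longrightarrow> T \<inter> T' = {}"
    proof (intro ballI impI)
      fix T T' assume "T \<in> (`) f ` S" "T' \<in> (`) f ` S" "T \<noteq> T'"
      then obtain U U' where "U \<in> S" "U' \<in> S" "T = f ` U" "T' = f ` U'" "U \<noteq> U'" by auto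
      then have "U \<inter> U' = {}" using S by (auto simp: is_cover_def)
      then show "T \<inter> T' = {}" using \<open>T = f ` U\<close> \<open>T' = f ` U'\<close> inj
        by (simp add: image_Int[symmetric])
    qed
  qed
  then show ?thesis by (auto simp: has_tromino_cover_def)
qed

definition rot :: "cell \<Rightarrow> cell" where "rot p = (- snd p - 1, fst p)"
definition roti :: "cell \<Rightarrow> cell" where "roti p = (snd p, - fst p - 1)"
definition sh :: "cell \<Rightarrow> cell" where "sh p = (fst p, snd p + 3)"

lemma rot_mem: "x \<in> rot ` A \<longleftrightarrow> roti x \<in> A"
proof
  assume "x \<in> rot ` A" then show "roti x \<in> A" by (auto simp: rot_def roti_def)
next
  assume "roti x \<in> A" then have "rot (roti x) \<in> rot ` A" by blast
  moreover have "rot (roti x) = x" by (cases x) (simp add: rot_def roti_def)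
  ultimately show "x \<in> rot ` A" by simp
qed

lemma sh_mem: "(a,b) \<in> sh ` A \<longleftrightarrow> (a, b - 3) \<in> A"
proof
  assume "(a,b) \<in> sh ` A" then show "(a, b-3) \<in> A" by (auto simp: sh_def)
next
  assume "(a,b-3) \<in> A" then have "sh (a,b-3) \<in> sh ` A" by blast
  then show "(a,b) \<in> sh ` A" by (simp add: sh_def)
qed

lemma inj_rot: "inj rot" by (auto simp: inj_def rot_def)
lemma inj_sh: "inj sh" by (auto simp: inj_def sh_def)

lemma rot_blk: "\<exists>i' j'. rot ` block2 i j = block2 i' j'"
  by (rule exI[of _ "-j-2"], rule exI[of _ i]) (auto simp: block2_def rot_def)

lemma sh_blk: "\<exists>i' j'. sh ` block2 i j = block2 i' j'"
  by (rule exI[of _ "i"], rule exI[of _ "j+3"]) (auto simp: block2_def sh_def)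

definition Qd :: "int \<Rightarrow> cell set" where
  "Qd k = {(a,b). 0 \<le> a \<and> 0 \<le> b \<and> k \<le> a + b \<and> a + b \<le> k + 3}"

lemma AD_mem: "(a,b) \<in> aztec_diamond n \<longleftrightarrow>
   \<bar>a\<bar> + \<bar>b\<bar> \<le> int n + 1 \<and> \<bar>a+1\<bar> + \<bar>b\<bar> \<le> int n + 1 \<and>
   \<bar>a\<bar> + \<bar>b+1\<bar> \<le> int n + 1 \<and> \<bar>a+1\<bar> + \<bar>b+1\<bar> \<le> int n + 1"
  by (auto simp: aztec_diamond_def)

lemma iv5: "(0::int) \<le> a \<Longrightarrow> a \<le> 5 \<Longrightarrow> a = 0 \<or> a = 1 \<or> a = 2 \<or> a = 3 \<or> a = 4 \<or> a = 5" by arith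
lemma iv3: "(0::int) \<le> a \<Longrightarrow> a \<le> 3 \<Longrightarrow> a = 0 \<or> a = 1 \<or> a = 2 \<or> a = 3" by arith

lemma Qd2: "Qd 2 = (block2 2 0 - {(2,1)}) \<union> ((block2 4 0 - {(5,1)}) \<union> ((block2 1 1 - {(2,2)})
   \<union> ((block2 0 2 - {(1,2)}) \<union> ((block2 2 2 - {(3,3)}) \<union> (block2 0 4 - {(1,5)})))))"
  (is "_ = ?R")
proof (rule set_eqI)
  fix p :: cell
  obtain a b where p: "p = (a,b)" by (cases p)
  have 1: "(a,b) \<in> ?R" if "(a,b) \<in> Qd 2"
  proof -
    have "0 \<le> a" "a \<le> 5" "0 \<le> b" "b \<le> 5" "2 \<le> a + b" "a + b \<le> 5" using that by (auto simp: Qd_def)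
    have s: "2 \<le> a + b" "a + b \<le> 5" by fact+
    show ?thesis using iv5[OF \<open>0 \<le> a\<close> \<open>a \<le> 5\<close>] iv5[OF \<open>0 \<le> b\<close> \<open>b \<le> 5\<close>] s
      by (elim disjE; simp add: block2_def)
  qed
  have 2: "(a,b) \<in> Qd 2" if "(a,b) \<in> ?R"
    using that by (auto simp: block2_def Qd_def)
  show "p \<in> Qd 2 \<longleftrightarrow> p \<in> ?R" unfolding p by (rule iffI[OF 1 2])
qed

lemma base: "has_tromino_cover (Qd 2)"
  unfolding Qd2
  by (intro hc_union hc_single) (auto simp: block2_def)

lemma step_eq: assumes "k \<ge> 0" shows
  "Qd (k+3) = (block2 (k+5) 0 - {(k+6,1)}) \<union> ((block2 (k+3) 0 - {(k+3,1)}) \<union>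
     ((block2 (k+3) 1 - {(k+4,1)}) \<union> ((block2 (k+1) 1 - {(k+1,1)}) \<union> sh ` Qd k)))"
  (is "_ = ?R")
proof (rule set_eqI)
  fix p :: cell
  obtain a b where p: "p = (a,b)" by (cases p)
  have 1: "(a,b) \<in> ?R" if "(a,b) \<in> Qd (k+3)"
  proof (cases "b \<ge> 3")
    case True
    then have "(a, b-3) \<in> Qd k" using that by (auto simp: Qd_def)
    then have "(a,b) \<in> sh ` Qd k" using sh_mem by blast
    then show ?thesis by blast
  next
    case False
    have h: "0 \<le> a" "0 \<le> b" "k + 3 \<le> a + b" "a + b \<le> k + 6" using that by (auto simp: Qd_def)
    have "b = 0 \<or> b = 1 \<or> b = 2" using False h by arith
    then show ?thesis
    proof (elim disjE)
      assume b: "b = 0"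
      have "a = k+3 \<or> a = k+4 \<or> a = k+5 \<or> a = k+6" using h b by arith
      then show ?thesis using b by (auto simp: block2_def)
    next
      assume b: "b = 1"
      have "a = k+2 \<or> a = k+3 \<or> a = k+4 \<or> a = k+5" using h b by arith
      then show ?thesis using b by (auto simp: block2_def)
    next
      assume b: "b = 2"
      have "a = k+1 \<or> a = k+2 \<or> a = k+3 \<or> a = k+4" using h b by arith
      then show ?thesis using b by (auto simp: block2_def)
    qed
  qed
  have 2: "(a,b) \<in> Qd (k+3)" if "(a,b) \<in> ?R"
    using that assms by (auto simp: block2_def Qd_def sh_def)
  show "p \<in> Qd (k+3) \<longleftrightarrow> p \<in> ?R" unfolding p by (rule iffI[OF 1 2])
qed

lemma step: assumes "k \<ge> 0" "has_tromino_cover (Qd k)" shows "has_tromino_cover (Qd (k+3))"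
  unfolding step_eq[OF assms(1)]
  apply (intro hc_union hc_single hc_image[OF inj_sh sh_blk] assms(2))
  using assms(1) by (auto simp: block2_def sh_def Qd_def)

lemma Qd_all: "has_tromino_cover (Qd (3 * int s + 2))"
proof (induction s)
  case 0 then show ?case using base by simp
next
  case (Suc s)
  have "has_tromino_cover (Qd ((3 * int s + 2) + 3))" by (rule step) (use Suc in auto)
  then show ?case by (simp add: algebra_simps)
qed

lemma ring_eq: "aztec_diamond (K+4) = aztec_diamond K \<union> (Qd (int K) \<union> (rot ` Qd (int K) \<union>
   (rot ` rot ` Qd (int K) \<union> rot ` rot ` rot ` Qd (int K))))"
proof (rule set_eqI)
  fix p :: cell
  obtain a b where p: "p = (a,b)" by (cases p)
  show "p \<in> aztec_diamond (K+4) \<longleftrightarrow> p \<in> aztec_diamond K \<union> (Qd (int K) \<union> (rot ` Qd (int K) \<union>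
   (rot ` rot ` Qd (int K) \<union> rot ` rot ` rot ` Qd (int K))))"
    unfolding p by (simp add: rot_mem roti_def Qd_def AD_mem) arith
qed

lemma disjI2: "(\<And>a b. (a,b)\<in>A \<Longrightarrow> (a,b)\<notin>B) \<Longrightarrow> A \<inter> B = {}" by auto

lemma ring_disj: "aztec_diamond K \<inter> (Qd (int K) \<union> (rot ` Qd (int K) \<union>
   (rot ` rot ` Qd (int K) \<union> rot ` rot ` rot ` Qd (int K)))) = {}"
  "Qd (int K) \<inter> (rot ` Qd (int K) \<union> (rot ` rot ` Qd (int K) \<union> rot ` rot ` rot ` Qd (int K))) = {}"
  "rot ` Qd (int K) \<inter> (rot ` rot ` Qd (int K) \<union> rot ` rot ` rot ` Qd (int K)) = {}"
  "rot ` rot ` Qd (int K) \<inter> rot ` rot ` rot ` Qd (int K) = {}"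
  by (rule disjI2; simp add: rot_mem roti_def Qd_def AD_mem; arith)+

theorem corollary3:
  fixes n :: nat
  assumes "n \<ge> 2" and "3 dvd n"
    and "has_tromino_cover (aztec_diamond (n - 1))"
  shows "has_tromino_cover (aztec_diamond (n + 3))"
proof -
  obtain t where t: "n = 3 * t" using assms(2) by blast
  with assms(1) obtain s where s: "t = Suc s" by (cases t) auto
  define K where "K = n - 1"
  have K: "int K = 3 * int s + 2" "n + 3 = K + 4" using t s unfolding K_def by auto
  have Q: "has_tromino_cover (Qd (int K))" unfolding K(1) by (rule Qd_all)
  have R: "has_tromino_cover (Qd (int K) \<union> (rot ` Qd (int K) \<union>
   (rot ` rot ` Qd (int K) \<union> rot ` rot ` rot ` Qd (int K))))"
    by (intro hc_union hc_image[OF inj_rot rot_blk] Q ring_disj)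
  have "has_tromino_cover (aztec_diamond (K+4))"
    unfolding ring_eq
    by (rule hc_union[OF _ R ring_disj(1)]) (use assms(3) K_def in simp)
  then show ?thesis using K(2) by (simp add: add.commute)
qed

end
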